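(* There exists a pairwise-intersecting double-interval society with $8$ voters and approval number $3$. On the other hand, every double-$8$ string has diameter at least $3$, so every society obtained from a double-$8$ string (by the construction below) has approval number at least $4$.
   Context: A double-interval society consists of a finite set of $n$ voters, each voter $v$ having an approval set $A_v\subseteq\mathbb{R}$ that is the union of two disjoint bounded closed intervals; it is pairwise-intersecting if $A_u\cap A_v\ne\emptyset$ for all voters $u,v$. The approval number of the society is the maximum over $p\in\mathbb{R}$ of the number of voters $v$ with $p\in A_v$. A double-$n$ string is a string of length $2n$ over $n$ symbols with each symbol appearing exactly twice; the distance between two distinct symbols is the minimum absolute difference of positions of an occurrence of each, and the diameter is the maximum of these distances over all pairs of distinct symbols. From a double-$n$ string of diameter $d$ one builds a society by letting each symbol be a voter and assigning to each of the $2n$ entries a closed interval, all of equal width, placed in the order of the string with spacing such that each interval overlaps exactly the intervals of the $d$ entries on either side of it; such a society is pairwise-intersecting and has approval number $d+1$. *)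

theory Defs
  imports Complex_Main
begin

definition double_interval :: "real set \<Rightarrow> bool" where
  "double_interval S \<longleftrightarrow>
     (\<exists>a b c d. a \<le> b \<and> c \<le> d \<and> {a..b} \<inter> {c..d} = {} \<and> S = {a..b} \<union> {c..d})"

definition double_interval_society :: "nat \<Rightarrow> (nat \<Rightarrow> real set) \<Rightarrow> bool" where
  "double_interval_society n A \<longleftrightarrow> (\<forall>v<n. double_interval (A v))"

definition pairwise_intersecting :: "nat \<Rightarrow> (nat \<Rightarrow> real set) \<Rightarrow> bool" where
  "pairwise_intersecting n A \<longleftrightarrow> (\<forall>u<n. \<forall>v<n. A u \<inter> A v \<noteq> {})"

definition approval_number :: "nat \<Rightarrow> (nat \<Rightarrow> real set) \<Rightarrow> nat" where
  "approval_number n A = Max ((\<lambda>p. card {v. v < n \<and> p \<in> A v}) ` UNIV)"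

definition double_string :: "nat \<Rightarrow> nat list \<Rightarrow> bool" where
  "double_string n s \<longleftrightarrow> length s = 2 * n \<and> set s \<subseteq> {..<n} \<and> (\<forall>a<n. count_list s a = 2)"

definition sym_dist :: "nat list \<Rightarrow> nat \<Rightarrow> nat \<Rightarrow> nat" where
  "sym_dist s a b = Min {nat \<bar>int i - int j\<bar> | i j. i < length s \<and> j < length s \<and> s ! i = a \<and> s ! j = b}"

definition diameter :: "nat \<Rightarrow> nat list \<Rightarrow> nat" where
  "diameter n s = Max {sym_dist s a b | a b. a < n \<and> b < n \<and> a \<noteq> b}"

text \<open>A placement realizing the construction for a string s of diameter d: entry i gets the
  closed interval [x i, x i + w] (equal widths), placed in order, such that the intervals of
  entries i < j overlap exactly when j - i \<le> d.\<close>
definition valid_placement :: "nat list \<Rightarrow> nat \<Rightarrow> (nat \<Rightarrow> real) \<Rightarrow> real \<Rightarrow> bool" where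
  "valid_placement s d x w \<longleftrightarrow> w > 0 \<and>
     (\<forall>i j. i < j \<and> j < length s \<longrightarrow> x i < x j) \<and>
     (\<forall>i j. i < j \<and> j < length s \<longrightarrow> ({x i..x i + w} \<inter> {x j..x j + w} \<noteq> {} \<longleftrightarrow> j - i \<le> d))"

definition string_society :: "nat list \<Rightarrow> (nat \<Rightarrow> real) \<Rightarrow> real \<Rightarrow> nat \<Rightarrow> real set" where
  "string_society s x w v = (\<Union>i\<in>{i. i < length s \<and> s ! i = v}. {x i..x i + w})"

end

theory Submission imports Defs begin

definition D :: "int list list" where
 "D = [[9,10,13,16],[0,2,6,9],[3,3,7,11],[5,6,10,12],[2,5,15,15],[0,4,12,14],[1,1,11,17],[4,7,16,16]]"

definition covers :: "nat \<Rightarrow> int \<Rightarrow> bool" where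
 "covers v k \<longleftrightarrow> (D!v!0 \<le> k \<and> k \<le> D!v!1) \<or> (D!v!2 \<le> k \<and> k \<le> D!v!3)"

definition Ex :: "nat \<Rightarrow> real set" where
 "Ex v = {of_int (D!v!0)..of_int (D!v!1)} \<union> {of_int (D!v!2)..of_int (D!v!3)}"

lemma Ex_floor: assumes "p \<in> Ex v" shows "covers v \<lfloor>p\<rfloor>"
proof -
  have a: "of_int a \<le> p \<Longrightarrow> a \<le> \<lfloor>p\<rfloor>" for a by (simp add: le_floor_iff)
  have b: "p \<le> of_int b \<Longrightarrow> \<lfloor>p\<rfloor> \<le> b" for b by (metis floor_mono floor_of_int)
  show ?thesis using assms unfolding Ex_def covers_def using a b by auto
qed

lemma Ex_int: "covers v k \<Longrightarrow> of_int k \<in> Ex v"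
  unfolding Ex_def covers_def by auto

lemma D_facts: "\<forall>v\<in>set [0..<8]. 0 \<le> D!v!0 \<and> D!v!0 \<le> D!v!1 \<and> D!v!1 < D!v!2 \<and> D!v!2 \<le> D!v!3 \<and> D!v!3 \<le> 17"
  unfolding D_def by code_simp

lemma cnt_range: "\<forall>k\<in>set [0..17]. length (filter (\<lambda>v. covers v k) [0..<8]) \<le> 3"
  unfolding covers_def D_def by code_simp

lemma pairw: "\<forall>u\<in>set [0..<8]. \<forall>v\<in>set [0..<8]. \<exists>k\<in>set [0..17]. covers u k \<and> covers v k"
  unfolding covers_def D_def by code_simp

lemma five: "filter (\<lambda>v. covers v 5) [0..<8] = [3,4,7]"
  unfolding covers_def D_def by code_simp

lemma cnt_all: "length (filter (\<lambda>v. covers v k) [0..<8]) \<le> 3"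
proof (cases "0 \<le> k \<and> k \<le> 17")
  case True thus ?thesis using cnt_range by auto
next
  case False
  have "filter (\<lambda>v. covers v k) [0..<8] = []"
    using D_facts False by (force simp: filter_empty_conv covers_def)
  thus ?thesis by simp
qed

lemma setfilt: "{v. v < 8 \<and> P v} = set (filter P [0..<8])" by auto

lemma card_le: "card {v. v < (8::nat) \<and> p \<in> Ex v} \<le> 3"
proof -
  have "card {v. v < (8::nat) \<and> p \<in> Ex v} \<le> card {v. v < 8 \<and> covers v \<lfloor>p\<rfloor>}"
    by (rule card_mono) (auto simp: Ex_floor)
  also have "\<dots> = length (filter (\<lambda>v. covers v \<lfloor>p\<rfloor>) [0..<8])"
    unfolding setfilt by (rule distinct_card) simp
  also have "\<dots> \<le> 3" by (rule cnt_all)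
  finally show ?thesis .
qed

lemma disj_iv: "(b::real) < c \<Longrightarrow> {a..b} \<inter> {c..d} = {}" by auto

lemma part1: "\<exists>A. double_interval_society 8 A \<and> pairwise_intersecting 8 A \<and> approval_number 8 A = 3"
proof (intro exI conjI)
  show "double_interval_society 8 Ex"
    unfolding double_interval_society_def double_interval_def
  proof (intro allI impI)
    fix v :: nat assume "v < 8"
    hence "v \<in> set [0..<8]" by simp
    hence f: "D!v!0 \<le> D!v!1 \<and> D!v!1 < D!v!2 \<and> D!v!2 \<le> D!v!3" using D_facts by blast
    have "real_of_int (D!v!0) \<le> of_int (D!v!1)" "real_of_int (D!v!2) \<le> of_int (D!v!3)"
      "{real_of_int (D!v!0)..of_int (D!v!1)} \<inter> {of_int (D!v!2)..of_int (D!v!3)} = {}"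
      using f by (simp_all add: disj_iv)
    thus "\<exists>a b c d. a \<le> b \<and> c \<le> d \<and> {a..b} \<inter> {c..d} = {} \<and> Ex v = {a..b} \<union> {c..d}"
      unfolding Ex_def by blast
  qed
  show "pairwise_intersecting 8 Ex"
    unfolding pairwise_intersecting_def
  proof (intro allI impI)
    fix u v :: nat assume "u < 8" "v < 8"
    hence "u \<in> set [0..<8]" "v \<in> set [0..<8]" by simp_all
    then obtain k where "covers u k" "covers v k" using pairw by blast
    thus "Ex u \<inter> Ex v \<noteq> {}" using Ex_int by blast
  qed
  have cl: "card {v. v < 8 \<and> p \<in> Ex v} \<in> {..3}" for p using card_le[of p] by simp
  show "approval_number 8 Ex = 3"
    unfolding approval_number_def
  proof (rule Max_eqI)
    show "finite (range (\<lambda>p. card {v. v < 8 \<and> p \<in> Ex v}))"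
      by (rule finite_subset[of _ "{..3}"]) (use cl in blast, simp)
    show "\<And>y. y \<in> range (\<lambda>p. card {v. v < 8 \<and> p \<in> Ex v}) \<Longrightarrow> y \<le> 3" using card_le by blast
    have e: "(5::real) \<in> Ex v \<longleftrightarrow> covers v 5" for v
    proof
      assume "(5::real) \<in> Ex v" from Ex_floor[OF this] show "covers v 5" by simp
    next
      assume "covers v 5" from Ex_int[OF this] show "(5::real) \<in> Ex v" by simp
    qed
    have "{v. v < 8 \<and> (5::real) \<in> Ex v} = {v. v < 8 \<and> covers v 5}" by (simp only: e)
    also have "\<dots> = {3,4,7}" unfolding setfilt five by simp
    finally have h: "{v. v < 8 \<and> (5::real) \<in> Ex v} = {3, 4, 7}" .
    have "card {v. v < 8 \<and> (5::real) \<in> Ex v} = 3" unfolding h by simp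
    thus "3 \<in> range (\<lambda>p. card {v. v < 8 \<and> p \<in> Ex v})"
      by (intro image_eqI[of _ _ 5]) auto
  qed
qed

definition W :: "nat list \<Rightarrow> nat \<Rightarrow> nat \<Rightarrow> nat set" where
  "W s d k = (\<lambda>i. s!i) ` {i. i \<le> k \<and> k - i \<le> d}"

lemma ds_facts:
  assumes "double_string 8 s"
  shows "length s = 16" "\<And>i. i < 16 \<Longrightarrow> s!i < 8"
    "\<And>a. a < 8 \<Longrightarrow> card {i. i < 16 \<and> s!i = a} = 2"
proof -
  have D: "length s = 2 * 8" "set s \<subseteq> {..<8}" "\<forall>a<8. count_list s a = 2"
    using assms unfolding double_string_def by blast+
  show l: "length s = 16" using D(1) by simp
  show "\<And>i. i < 16 \<Longrightarrow> s!i < 8"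
  proof -
    fix i :: nat assume "i < 16"
    hence "i < length s" using l by simp
    hence "s!i \<in> set s" by (rule nth_mem)
    thus "s!i < 8" using D(2) by blast
  qed
  fix a :: nat assume "a < 8"
  hence c: "count_list s a = 2" using D(3) by blast
  have "count_list s a = card {i. i < length s \<and> a = s!i}"
    unfolding count_list_eq_length_filter length_filter_conv_card ..
  also have "{i. i < length s \<and> a = s!i} = {i. i < 16 \<and> s!i = a}" unfolding l by blast
  finally show "card {i. i < 16 \<and> s!i = a} = 2" using c by simp
qed

lemma dist_wit:
  assumes ds: "double_string 8 s" and a: "a < 8" and b: "b < 8" and le: "sym_dist s a b \<le> d"
  shows "\<exists>i j. i < 16 \<and> j < 16 \<and> s!i = a \<and> s!j = b \<and> nat \<bar>int i - int j\<bar> \<le> d"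
proof -
  let ?S = "{nat \<bar>int i - int j\<bar> | i j. i < length s \<and> j < length s \<and> s ! i = a \<and> s ! j = b}"
  have l: "length s = 16" using ds_facts[OF ds] by simp
  have fin: "finite ?S"
  proof (rule finite_subset[of _ "(\<lambda>(i,j). nat \<bar>int i - int j\<bar>) ` ({..<length s} \<times> {..<length s})"])
    show "?S \<subseteq> (\<lambda>(i,j). nat \<bar>int i - int j\<bar>) ` ({..<length s} \<times> {..<length s})"
    proof
      fix z assume "z \<in> ?S"
      then obtain i j where "z = nat \<bar>int i - int j\<bar>" "i < length s" "j < length s" by blast
      thus "z \<in> (\<lambda>(i,j). nat \<bar>int i - int j\<bar>) ` ({..<length s} \<times> {..<length s})"
        by (intro image_eqI[of _ _ "(i,j)"]) simp_all
    qed
  qed simp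
  have ca: "card {i. i < 16 \<and> s!i = a} = 2" "card {i. i < 16 \<and> s!i = b} = 2"
    using ds_facts(3)[OF ds a] ds_facts(3)[OF ds b] by this
  have "0 < card {i. i < 16 \<and> s!i = a}" using ca(1) by linarith
  hence "{i. i < 16 \<and> s!i = a} \<noteq> {}" using card_gt_0_iff by blast
  then obtain i where i: "i < 16" "s!i = a" by blast
  have "0 < card {i. i < 16 \<and> s!i = b}" using ca(2) by linarith
  hence "{i. i < 16 \<and> s!i = b} \<noteq> {}" using card_gt_0_iff by blast
  then obtain j where j: "j < 16" "s!j = b" by blast
  have "i < length s" "j < length s" using i j l by simp_all
  hence "\<exists>i0 j0. nat \<bar>int i - int j\<bar> = nat \<bar>int i0 - int j0\<bar> \<and> i0 < length s \<and> j0 < length s \<and> s ! i0 = a \<and> s ! j0 = b"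
    using i j by (intro exI[of _ i] exI[of _ j]) simp
  hence "nat \<bar>int i - int j\<bar> \<in> ?S" by (simp only: mem_Collect_eq)
  hence ne: "?S \<noteq> {}" by blast
  have "Min ?S \<le> d" using le unfolding sym_dist_def .
  obtain i' j' where ij: "Min ?S = nat \<bar>int i' - int j'\<bar>" "i' < length s" "j' < length s" "s!i' = a" "s!j' = b"
    using Min_in[OF fin ne] by blast
  have "nat \<bar>int i' - int j'\<bar> \<le> d" using ij(1) \<open>Min ?S \<le> d\<close> by simp
  moreover have "i' < 16" "j' < 16" using ij l by simp_all
  ultimately show ?thesis using ij(4,5) by blast
qed

lemma core:
  assumes ds: "double_string 8 s"
    and dist: "\<forall>a b. a < 8 \<and> b < 8 \<and> a \<noteq> b \<longrightarrow> sym_dist s a b \<le> d"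
  shows "\<exists>k<16. card (W s d k) \<ge> 4"
proof (rule ccontr)
  assume "\<not> ?thesis"
  hence small: "\<And>k. k < 16 \<Longrightarrow> card (W s d k) \<le> 3" by force
  note F = ds_facts[OF ds]
  define a where "a = s!0"
  have a8: "a < 8" using F a_def by simp
  have "card {i. i < 16 \<and> s!i = a} = 2" using F(3) a8 by simp
  then obtain x y where xy: "{i. i < 16 \<and> s!i = a} = {x, y}" "x \<noteq> y" by (meson card_2_iff)
  have "0 \<in> {i. i < 16 \<and> s!i = a}" using a_def by simp
  then obtain p where P: "{i. i < 16 \<and> s!i = a} = {0, p}" "p \<noteq> 0" using xy by auto
  have p16: "p < 16" and sp: "s!p = a" using P(1) by (metis (mono_tags, lifting) insertCI mem_Collect_eq)+
  define k0 where "k0 = min d 15"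
  define k2 where "k2 = min (p + d) 15"
  have finW: "finite (W s d k)" for k unfolding W_def by (rule finite_imageI) (rule finite_subset[of _ "{..k}"], auto)
  have aW1: "a \<in> W s d k0" unfolding W_def k0_def using a_def by (auto intro!: image_eqI[of a _ 0])
  have aW2: "a \<in> W s d p" unfolding W_def using sp by (auto intro!: image_eqI[of a _ p])
  have aW3: "a \<in> W s d k2" unfolding W_def k2_def using sp p16 by (auto intro!: image_eqI[of a _ p])
  note aW = aW1 aW2 aW3
  have c2: "card (W s d k - {a}) \<le> 2" if "k < 16" "a \<in> W s d k" for k
    using small[OF that(1)] that(2) finW[of k] by (simp add: card_Diff_singleton)
  have sub: "{b. b < 8 \<and> b \<noteq> a} \<subseteq> (W s d k0 - {a}) \<union> (W s d p - {a}) \<union> (W s d k2 - {a})"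
  proof
    fix b assume "b \<in> {b. b < 8 \<and> b \<noteq> a}"
    hence b: "b < 8" "b \<noteq> a" by auto
    have "sym_dist s a b \<le> d" using dist a8 b by auto
    then obtain i j where ij: "i < 16" "j < 16" "s!i = a" "s!j = b" "nat \<bar>int i - int j\<bar> \<le> d"
      using dist_wit[OF ds a8 b(1)] by blast
    have "i \<in> {0, p}" using P(1) ij by blast
    hence "i = 0 \<or> i = p" by simp
    moreover have "i = 0 \<Longrightarrow> b \<in> W s d k0" unfolding W_def k0_def using ij
      by (auto intro!: image_eqI[of b _ j])
    moreover have "i = p \<Longrightarrow> j \<le> p \<Longrightarrow> b \<in> W s d p" unfolding W_def using ij
      by (auto intro!: image_eqI[of b _ j])
    moreover have "i = p \<Longrightarrow> j > p \<Longrightarrow> b \<in> W s d k2" unfolding W_def k2_def using ij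
      by (auto intro!: image_eqI[of b _ j])
    ultimately have "b \<in> W s d k0 \<or> b \<in> W s d p \<or> b \<in> W s d k2" by linarith
    thus "b \<in> (W s d k0 - {a}) \<union> (W s d p - {a}) \<union> (W s d k2 - {a})"
      using b(2) by blast
  qed
  have "card {b. b < 8 \<and> b \<noteq> a} \<le> card ((W s d k0 - {a}) \<union> (W s d p - {a}) \<union> (W s d k2 - {a}))"
    by (rule card_mono) (auto simp: finW sub)
  also have "\<dots> \<le> card (W s d k0 - {a}) + card (W s d p - {a}) + card (W s d k2 - {a})"
    using card_Un_le[of "W s d k0 - {a}" "W s d p - {a}"] card_Un_le[of "(W s d k0 - {a}) \<union> (W s d p - {a})" "W s d k2 - {a}"]
    by linarith
  also have "\<dots> \<le> 6"
  proof -
    have "k0 < 16" "k2 < 16" unfolding k0_def k2_def by simp_all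
    thus ?thesis using c2[of k0] c2[of p] c2[of k2] aW p16 by linarith
  qed
  finally have le6: "card {b. b < 8 \<and> b \<noteq> a} \<le> 6" .
  have "{b. b < 8 \<and> b \<noteq> a} = {..<8} - {a}" by auto
  hence "card {b. b < 8 \<and> b \<noteq> a} = 7" using a8 by (simp add: card_Diff_singleton)
  thus False using le6 by simp
qed

lemma diam_ge:
  assumes "a < 8" "b < 8" "a \<noteq> b"
  shows "sym_dist s a b \<le> diameter 8 s"
proof -
  have fin: "finite {sym_dist s a b | a b. a < 8 \<and> b < 8 \<and> a \<noteq> b}"
    by (rule finite_subset[of _ "(\<lambda>(a,b). sym_dist s a b) ` ({..<8::nat} \<times> {..<8})"]) auto
  show ?thesis unfolding diameter_def by (rule Max_ge[OF fin]) (use assms in blast)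
qed

lemma part2: "double_string 8 s \<Longrightarrow> diameter 8 s \<ge> 3"
proof (rule ccontr)
  assume ds: "double_string 8 s" and "\<not> diameter 8 s \<ge> 3"
  hence "diameter 8 s \<le> 2" by simp
  hence "\<forall>a b. a < 8 \<and> b < 8 \<and> a \<noteq> b \<longrightarrow> sym_dist s a b \<le> 2"
    using diam_ge by (meson order_trans)
  then obtain k where "card (W s 2 k) \<ge> 4" using core[OF ds] by blast
  moreover have "card (W s 2 k) \<le> 3"
  proof -
    have "card (W s 2 k) \<le> card {i. i \<le> k \<and> k - i \<le> 2}" unfolding W_def
      by (rule card_image_le) (rule finite_subset[of _ "{..k}"], auto)
    also have "\<dots> \<le> card {k-2..k}" by (rule card_mono) auto
    also have "\<dots> \<le> 3" by simp
    finally show ?thesis .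
  qed
  ultimately show False by simp
qed

lemma part3:
  assumes ds: "double_string 8 s" and vp: "valid_placement s (diameter 8 s) x w"
  shows "approval_number 8 (string_society s x w) \<ge> 4"
proof -
  let ?d = "diameter 8 s"
  note F = ds_facts[OF ds]
  obtain k where k: "k < 16" "card (W s ?d k) \<ge> 4"
    using core[OF ds] diam_ge by blast
  let ?V = "{v. v < 8 \<and> x k \<in> string_society s x w v}"
  have "W s ?d k \<subseteq> ?V"
  proof
    fix v assume "v \<in> W s ?d k"
    then obtain i where i: "i \<le> k" "k - i \<le> ?d" "v = s!i" unfolding W_def by auto
    have "x k \<in> {x i..x i + w}"
    proof (cases "i = k")
      case True thus ?thesis using vp by (simp add: valid_placement_def)
    next
      case False
      hence "i < k" using i by simp
      hence lt: "x i < x k" and ne: "{x i..x i + w} \<inter> {x k..x k + w} \<noteq> {}"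
        using vp i k F(1) unfolding valid_placement_def by auto
      then obtain y where "x i \<le> y" "y \<le> x i + w" "x k \<le> y" by auto
      thus ?thesis using lt by simp
    qed
    moreover have "i < length s" using i k F(1) by simp
    ultimately have "x k \<in> string_society s x w v" unfolding string_society_def using i(3) by blast
    moreover have "v < 8" using F(2) i k by simp
    ultimately show "v \<in> ?V" by simp
  qed
  moreover have "finite ?V" by (rule finite_subset[of _ "{..<8}"]) auto
  ultimately have "card (W s ?d k) \<le> card ?V" by (intro card_mono)
  hence "4 \<le> card ?V" using k(2) by linarith
  also have "card ?V \<le> approval_number 8 (string_society s x w)"
  proof -
    have fin: "finite (range (\<lambda>p. card {v. v < 8 \<and> p \<in> string_society s x w v}))"
    proof (rule finite_subset[of _ "{..8}"])
      show "range (\<lambda>p. card {v. v < 8 \<and> p \<in> string_society s x w v}) \<subseteq> {..8}"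
      proof clarsimp
        fix p
        have "card {v. v < 8 \<and> p \<in> string_society s x w v} \<le> card {..<8::nat}"
          by (rule card_mono) auto
        thus "card {v. v < 8 \<and> p \<in> string_society s x w v} \<le> 8" by simp
      qed
    qed simp
    show ?thesis unfolding approval_number_def by (rule Max_ge[OF fin]) simp
  qed
  finally show ?thesis .
qed

theorem proposition5p1:
  shows "(\<exists>A. double_interval_society 8 A \<and> pairwise_intersecting 8 A \<and> approval_number 8 A = 3)
    \<and> (\<forall>s. double_string 8 s \<longrightarrow> diameter 8 s \<ge> 3)
    \<and> (\<forall>s x w. double_string 8 s \<and> valid_placement s (diameter 8 s) x w \<longrightarrow>
          approval_number 8 (string_society s x w) \<ge> 4)"
  using part1 part2 part3 by blast

end
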